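(* Assume the support set $\mathcal U\subseteq\mathbb R^n$ is nonempty, compact and convex. Then the function $f(\mathbf s,\mathbf u)$ is bounded on $\mathcal S\times\mathcal U$, and $f(\mathbf s,\mathbf u)$ is jointly convex in $\mathbf s$ and $\mathbf u$.
   Context: $n\ge1$, $T>0$, $\mathcal S=\{\mathbf s\in\mathbb R^n:\mathbf s\ge0,\sum_is_i\le T\}$; costs $\mathbf c,\mathbf d\in\mathbb R^n_+$, $C\ge0$ with $d_{i+1}-d_i\le c_{i+1}$ for $i=1,\dots,n-1$. $f(\mathbf s,\mathbf u)$ is the optimal value of the linear program $\min_{\mathbf w\in\mathbb R^{n+1},\mathbf v\in\mathbb R^n}\sum_{i=1}^n(c_iw_i+d_iv_i)+Cw_{n+1}$ s.t. $w_i-v_{i-1}=u_{i-1}+w_{i-1}-s_{i-1}$ ($i=2,\dots,n+1$), $\mathbf w\ge0,w_1=0,\mathbf v\ge0$. *)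

theory Defs
  imports "HOL-Analysis.Analysis"
begin

(* Vectors in R^n are represented as functions nat => real, with the
   meaningful components at indices 1..n (and w at indices 1..n+1). *)

definition Sset :: "nat \<Rightarrow> real \<Rightarrow> (nat \<Rightarrow> real) set" where
  "Sset n T = {s. (\<forall>i. i \<notin> {1..n} \<longrightarrow> s i = 0) \<and> (\<forall>i\<in>{1..n}. 0 \<le> s i)
                   \<and> (\<Sum>i=1..n. s i) \<le> T}"

definition lp_feasible :: "nat \<Rightarrow> (nat \<Rightarrow> real) \<Rightarrow> (nat \<Rightarrow> real)
      \<Rightarrow> ((nat \<Rightarrow> real) \<times> (nat \<Rightarrow> real)) set" where
  "lp_feasible n s u = {(w, v).
      (\<forall>i\<in>{2..n+1}. w i - v (i-1) = u (i-1) + w (i-1) - s (i-1))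
    \<and> (\<forall>i\<in>{1..n+1}. 0 \<le> w i) \<and> w 1 = 0 \<and> (\<forall>i\<in>{1..n}. 0 \<le> v i)}"

definition lp_obj :: "nat \<Rightarrow> (nat \<Rightarrow> real) \<Rightarrow> (nat \<Rightarrow> real) \<Rightarrow> real
      \<Rightarrow> (nat \<Rightarrow> real) \<Rightarrow> (nat \<Rightarrow> real) \<Rightarrow> real" where
  "lp_obj n c d C w v = (\<Sum>i=1..n. c i * w i + d i * v i) + C * w (n+1)"

definition fval :: "nat \<Rightarrow> (nat \<Rightarrow> real) \<Rightarrow> (nat \<Rightarrow> real) \<Rightarrow> real
      \<Rightarrow> (nat \<Rightarrow> real) \<Rightarrow> (nat \<Rightarrow> real) \<Rightarrow> real" where
  "fval n c d C s u = Inf ((\<lambda>(w, v). lp_obj n c d C w v) ` lp_feasible n s u)"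

end

theory Submission
  imports Defs
begin

lemma feas_nonempty:
  "(\<lambda>i. \<Sum>j=1..<i. u j + \<bar>u j\<bar> + \<bar>s j\<bar> - s j, \<lambda>j. \<bar>s j\<bar> + \<bar>u j\<bar>) \<in> lp_feasible n s u"
proof -
  define g where "g j = u j + \<bar>u j\<bar> + \<bar>s j\<bar> - s j" for j
  have gn: "g j \<ge> 0" for j unfolding g_def by linarith
  have step: "(\<Sum>j=1..<i. g j) = (\<Sum>j=1..<i-1. g j) + g (i-1)" if "i \<in> {2..n+1}" for i
  proof -
    have "i = Suc (i-1)" "1 \<le> i - 1" using that by auto
    then show ?thesis by (metis sum.atLeastLessThan_Suc)
  qed
  show ?thesis unfolding lp_feasible_def
    using step by (auto simp: g_def[symmetric] intro!: sum_nonneg gn) (auto simp: g_def)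
qed

lemma obj_nonneg:
  assumes "(w, v) \<in> lp_feasible n s u" "\<forall>i\<in>{1..n}. 0 \<le> c i" "\<forall>i\<in>{1..n}. 0 \<le> d i" "C \<ge> 0"
  shows "0 \<le> lp_obj n c d C w v"
  using assms unfolding lp_feasible_def lp_obj_def
  by (auto intro!: add_nonneg_nonneg sum_nonneg mult_nonneg_nonneg)

lemma fval_le:
  assumes "(w, v) \<in> lp_feasible n s u" "\<forall>i\<in>{1..n}. 0 \<le> c i" "\<forall>i\<in>{1..n}. 0 \<le> d i" "C \<ge> 0"
  shows "fval n c d C s u \<le> lp_obj n c d C w v"
  unfolding fval_def
proof (rule cInf_lower)
  show "lp_obj n c d C w v \<in> (\<lambda>(w, v). lp_obj n c d C w v) ` lp_feasible n s u"
    using assms(1) by force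
  show "bdd_below ((\<lambda>(w, v). lp_obj n c d C w v) ` lp_feasible n s u)"
    unfolding bdd_below_def by (intro exI[of _ 0]) (auto intro: obj_nonneg[OF _ assms(2-4)])
qed

lemma fval_ge:
  assumes "\<And>w v. (w, v) \<in> lp_feasible n s u \<Longrightarrow> a \<le> lp_obj n c d C w v"
  shows "a \<le> fval n c d C s u"
  unfolding fval_def
  by (rule cInf_greatest) (use feas_nonempty[of u s n] assms in force)+

lemma fval_nonneg:
  assumes "\<forall>i\<in>{1..n}. 0 \<le> c i" "\<forall>i\<in>{1..n}. 0 \<le> d i" "C \<ge> 0"
  shows "0 \<le> fval n c d C s u"
  by (rule fval_ge) (use obj_nonneg assms in blast)

lemma feas_comb:
  assumes "(w1, v1) \<in> lp_feasible n s1 u1" "(w2, v2) \<in> lp_feasible n s2 u2" "0 \<le> t" "t \<le> 1"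
  shows "((\<lambda>i. t * w1 i + (1 - t) * w2 i), (\<lambda>i. t * v1 i + (1 - t) * v2 i))
     \<in> lp_feasible n (\<lambda>i. t * s1 i + (1 - t) * s2 i) (\<lambda>i. t * u1 i + (1 - t) * u2 i)"
proof -
  have "t * w1 i + (1 - t) * w2 i - (t * v1 (i - 1) + (1 - t) * v2 (i - 1)) =
        t * u1 (i - 1) + (1 - t) * u2 (i - 1) + (t * w1 (i - 1) + (1 - t) * w2 (i - 1)) -
        (t * s1 (i - 1) + (1 - t) * s2 (i - 1))" if "i \<in> {2..n+1}" for i
  proof -
    have "w1 i - v1 (i-1) = u1 (i-1) + w1 (i-1) - s1 (i-1)"
         "w2 i - v2 (i-1) = u2 (i-1) + w2 (i-1) - s2 (i-1)"
      using assms(1,2) that unfolding lp_feasible_def by auto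
    then have "t * (w1 i - v1 (i-1)) + (1-t) * (w2 i - v2 (i-1)) =
       t * (u1 (i-1) + w1 (i-1) - s1 (i-1)) + (1-t) * (u2 (i-1) + w2 (i-1) - s2 (i-1))" by simp
    then show ?thesis by (simp add: algebra_simps)
  qed
  moreover have "0 \<le> t * w1 i + (1 - t) * w2 i" if "i \<in> {1..n+1}" for i
    using assms that unfolding lp_feasible_def by (auto intro!: add_nonneg_nonneg mult_nonneg_nonneg)
  moreover have "0 \<le> t * v1 i + (1 - t) * v2 i" if "i \<in> {1..n}" for i
    using assms that unfolding lp_feasible_def by (auto intro!: add_nonneg_nonneg mult_nonneg_nonneg)
  moreover have "w1 1 = 0" "w2 1 = 0" using assms unfolding lp_feasible_def by auto
  ultimately show ?thesis unfolding lp_feasible_def by auto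
qed

lemma obj_comb:
  "lp_obj n c d C (\<lambda>i. t * w1 i + (1 - t) * w2 i) (\<lambda>i. t * v1 i + (1 - t) * v2 i)
   = t * lp_obj n c d C w1 v1 + (1 - t) * lp_obj n c d C w2 v2"
proof -
  have "(\<Sum>i=1..n. c i * (t * w1 i + (1-t) * w2 i) + d i * (t * v1 i + (1-t) * v2 i))
     = (\<Sum>i=1..n. t*(c i * w1 i + d i * v1 i) + (1-t)*(c i * w2 i + d i * v2 i))"
    by (rule sum.cong) (auto simp: algebra_simps)
  also have "\<dots> = (\<Sum>i=1..n. t*(c i * w1 i + d i * v1 i)) + (\<Sum>i=1..n. (1-t)*(c i * w2 i + d i * v2 i))"
    by (rule sum.distrib)
  also have "\<dots> = t*(\<Sum>i=1..n. c i * w1 i + d i * v1 i) + (1-t)*(\<Sum>i=1..n. c i * w2 i + d i * v2 i)"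
    by (simp only: sum_distrib_left)
  finally have e: "(\<Sum>i=1..n. c i * (t * w1 i + (1-t) * w2 i) + d i * (t * v1 i + (1-t) * v2 i)) =
     t*(\<Sum>i=1..n. c i * w1 i + d i * v1 i) + (1-t)*(\<Sum>i=1..n. c i * w2 i + d i * v2 i)" .
  show ?thesis unfolding lp_obj_def e by (simp add: algebra_simps)
qed

lemma fval_bound:
  assumes s: "s \<in> Sset n T" and M: "\<forall>i. \<bar>u i\<bar> \<le> M"
    and c: "\<forall>i\<in>{1..n}. 0 \<le> c i" and d: "\<forall>i\<in>{1..n}. 0 \<le> d i" and C: "C \<ge> 0"
  shows "fval n c d C s u \<le> (\<Sum>i=1..n. c i * (2*M*n) + d i * (T + M)) + C * (2*M*n)"
proof -
  define g where "g j = u j + \<bar>u j\<bar> + \<bar>s j\<bar> - s j" for j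
  define w where "w i = (\<Sum>j=1..<i. g j)" for i
  define v where "v j = \<bar>s j\<bar> + \<bar>u j\<bar>" for j
  have fe: "(w, v) \<in> lp_feasible n s u"
    using feas_nonempty[of u s n] unfolding w_def v_def g_def .
  have gn: "g j \<ge> 0" for j unfolding g_def by linarith
  have s0: "\<forall>i\<in>{1..n}. 0 \<le> s i" and sT: "(\<Sum>i=1..n. s i) \<le> T"
    using s unfolding Sset_def by auto
  have sle: "s i \<le> T" if "i \<in> {1..n}" for i
  proof -
    have "s i \<le> (\<Sum>i=1..n. s i)" by (rule member_le_sum) (use that s0 in auto)
    then show ?thesis using sT by linarith
  qed
  have gle: "g j \<le> 2*M" if "j \<in> {1..n}" for j
    using s0 that M[rule_format, of j] unfolding g_def by auto
  have wle: "w i \<le> 2*M*n" if "i \<in> {1..n+1}" for i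
  proof -
    have "w i \<le> (\<Sum>j=1..n. g j)" unfolding w_def
      by (rule sum_mono2) (use that gn in auto)
    also have "\<dots> \<le> (\<Sum>j=1..n. 2*M)" by (rule sum_mono) (use gle in auto)
    finally show ?thesis by (simp add: mult_ac)
  qed
  have vle: "v j \<le> T + M" if "j \<in> {1..n}" for j
    using s0 that M[rule_format, of j] sle[OF that] unfolding v_def by auto
  have "fval n c d C s u \<le> lp_obj n c d C w v"
    by (rule fval_le[OF fe c d C])
  also have "\<dots> \<le> (\<Sum>i=1..n. c i * (2*M*n) + d i * (T + M)) + C * (2*M*n)"
    unfolding lp_obj_def
  proof (rule add_mono)
    show "(\<Sum>i = 1..n. c i * w i + d i * v i) \<le> (\<Sum>i=1..n. c i * (2*M*n) + d i * (T + M))"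
      by (rule sum_mono) (use c d wle vle in \<open>auto intro!: add_mono mult_left_mono\<close>)
    show "C * w (n + 1) \<le> C * (2 * M * real n)"
      by (rule mult_left_mono) (use wle C in auto)
  qed
  finally show ?thesis .
qed

theorem lemma4:
  fixes n :: nat and T C :: real and c d :: "nat \<Rightarrow> real"
    and U :: "(nat \<Rightarrow> real) set"
  assumes "n \<ge> 1" and "T > 0"
    and "\<forall>i\<in>{1..n}. 0 \<le> c i" and "\<forall>i\<in>{1..n}. 0 \<le> d i" and "C \<ge> 0"
    and "\<forall>i\<in>{1..<n}. d (i+1) - d i \<le> c (i+1)"
    and "\<forall>u\<in>U. \<forall>i. i \<notin> {1..n} \<longrightarrow> u i = 0"
    and "U \<noteq> {}" and "compact U"
    and "\<forall>x\<in>U. \<forall>y\<in>U. \<forall>t::real. 0 \<le> t \<and> t \<le> 1 \<longrightarrow> (\<lambda>i. t * x i + (1 - t) * y i) \<in> U"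
  shows "(\<exists>B. \<forall>s\<in>Sset n T. \<forall>u\<in>U. \<bar>fval n c d C s u\<bar> \<le> B)
       \<and> (\<forall>s1\<in>Sset n T. \<forall>u1\<in>U. \<forall>s2\<in>Sset n T. \<forall>u2\<in>U. \<forall>t::real. 0 \<le> t \<and> t \<le> 1 \<longrightarrow>
            fval n c d C (\<lambda>i. t * s1 i + (1 - t) * s2 i) (\<lambda>i. t * u1 i + (1 - t) * u2 i)
              \<le> t * fval n c d C s1 u1 + (1 - t) * fval n c d C s2 u2)"
proof (intro conjI)
  note c = assms(3) and d = assms(4) and C = assms(5)
  define h where "h u = (\<Sum>i=1..n. \<bar>u i\<bar>)" for u :: "nat \<Rightarrow> real"
  have "continuous_on U h" unfolding h_def
    by (intro continuous_intros continuous_on_product_then_coordinatewise continuous_on_id)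
  then have "compact (h ` U)" using assms(9) by (rule compact_continuous_image)
  then obtain M where M: "\<forall>x\<in>h ` U. norm x \<le> M"
    using compact_imp_bounded bounded_iff by metis
  have uM: "\<forall>i. \<bar>u i\<bar> \<le> M" if "u \<in> U" for u
  proof
    fix i
    have hM: "h u \<le> M" using M that by auto
    have h0: "0 \<le> h u" unfolding h_def by (rule sum_nonneg) auto
    show "\<bar>u i\<bar> \<le> M"
    proof (cases "i \<in> {1..n}")
      case True
      have "\<bar>u i\<bar> \<le> h u" unfolding h_def by (rule member_le_sum) (use True in auto)
      then show ?thesis using hM by linarith
    next
      case False
      then show ?thesis using assms(7) that hM h0 by auto
    qed
  qed
  show "\<exists>B. \<forall>s\<in>Sset n T. \<forall>u\<in>U. \<bar>fval n c d C s u\<bar> \<le> B"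
  proof (intro exI ballI)
    fix s u assume "s \<in> Sset n T" "u \<in> U"
    then show "\<bar>fval n c d C s u\<bar> \<le> (\<Sum>i=1..n. c i * (2*M*n) + d i * (T + M)) + C * (2*M*n)"
      using fval_bound[OF _ uM c d C] fval_nonneg[OF c d C] by auto
  qed
  show "\<forall>s1\<in>Sset n T. \<forall>u1\<in>U. \<forall>s2\<in>Sset n T. \<forall>u2\<in>U. \<forall>t::real. 0 \<le> t \<and> t \<le> 1 \<longrightarrow>
            fval n c d C (\<lambda>i. t * s1 i + (1 - t) * s2 i) (\<lambda>i. t * u1 i + (1 - t) * u2 i)
              \<le> t * fval n c d C s1 u1 + (1 - t) * fval n c d C s2 u2"
  proof (intro ballI allI impI)
    fix s1 u1 s2 u2 and t :: real
    assume "0 \<le> t \<and> t \<le> 1"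
    then have t0: "0 \<le> t" and t1: "t \<le> 1" by auto
    let ?f = "fval n c d C (\<lambda>i. t * s1 i + (1 - t) * s2 i) (\<lambda>i. t * u1 i + (1 - t) * u2 i)"
    have key: "?f \<le> t * lp_obj n c d C w1 v1 + (1 - t) * lp_obj n c d C w2 v2"
      if "(w1, v1) \<in> lp_feasible n s1 u1" "(w2, v2) \<in> lp_feasible n s2 u2" for w1 v1 w2 v2
      using fval_le[OF feas_comb[OF that t0 t1] c d C] obj_comb by metis
    show "?f \<le> t * fval n c d C s1 u1 + (1 - t) * fval n c d C s2 u2"
    proof (cases "t = 0 \<or> t = 1")
      case True
      then show ?thesis by auto
    next
      case False
      then have tp: "0 < t" and tq: "0 < 1 - t" using t0 t1 by auto
      have step1: "?f \<le> t * fval n c d C s1 u1 + (1 - t) * lp_obj n c d C w2 v2"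
        if "(w2, v2) \<in> lp_feasible n s2 u2" for w2 v2
      proof -
        have "(?f - (1 - t) * lp_obj n c d C w2 v2) / t \<le> fval n c d C s1 u1"
        proof (rule fval_ge)
          fix w1 v1 assume "(w1, v1) \<in> lp_feasible n s1 u1"
          from key[OF this that] tp
          show "(?f - (1 - t) * lp_obj n c d C w2 v2) / t \<le> lp_obj n c d C w1 v1"
            by (simp add: divide_simps) (simp add: algebra_simps)
        qed
        then show ?thesis using tp by (simp add: divide_simps) (simp add: algebra_simps)
      qed
      have "(?f - t * fval n c d C s1 u1) / (1 - t) \<le> fval n c d C s2 u2"
      proof (rule fval_ge)
        fix w2 v2 assume "(w2, v2) \<in> lp_feasible n s2 u2"
        from step1[OF this] tq
        show "(?f - t * fval n c d C s1 u1) / (1 - t) \<le> lp_obj n c d C w2 v2"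
          by (simp add: divide_simps) (simp add: algebra_simps)
      qed
      then show ?thesis using tq by (simp add: divide_simps) (simp add: algebra_simps)
    qed
  qed
qed

end
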